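(* Let $q$ be a prime power, $1\le k$, $k+1<n\le m$, let $g_1,\dots,g_n\in\mathbb{F}_{q^m}$ be linearly independent over $\mathbb{F}_q$, and let $\mathcal{G}$ be the Gabidulin code of dimension $k$ with respect to $g_1,\dots,g_n$. Let $f\in\mathcal{L}_q(x,\mathbb{F}_{q^m})$ be of the form $f(x)=x^{q^{k+1}}-a_1x^{q^k}+\sum_{i=0}^{k-1}c_ix^{q^i}$ with $a_1,c_i\in\mathbb{F}_{q^m}$, and let $\sigma_f=(f(g_1),\dots,f(g_n))$. Then $\sigma_f$ is not a deep hole of $\mathcal{G}$ in the rank metric (i.e. $d_R(\sigma_f,\mathcal{G})\ne n-k$) if and only if there exist $\mathbb{F}_q$-linearly independent elements $\beta_1,\dots,\beta_{k+1}\in\langle g_1,\dots,g_n\rangle$ such that $$a_1=\frac{\det\mathcal{R}_k(\beta_1,\dots,\beta_{k+1})}{\det M_{k+1}(\beta_1,\dots,\beta_{k+1})}.$$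
   Context: For $\beta_1,\dots,\beta_s\in\mathbb{F}_{q^m}$, the $t\times s$ Moore matrix $M_t(\beta_1,\dots,\beta_s)$ has $(i,j)$ entry $\beta_j^{q^{i-1}}$, $1\le i\le t$. $\mathcal{R}_k(\beta_1,\dots,\beta_{k+1})$ is the $(k+1)\times(k+1)$ matrix obtained from $M_{k+2}(\beta_1,\dots,\beta_{k+1})$ by deleting the row $(\beta_1^{q^k},\dots,\beta_{k+1}^{q^k})$. A $q$-linearized polynomial over $\mathbb{F}_{q^m}$ is $L(x)=\sum_{i=0}^{d}a_ix^{q^i}$, $a_i\in\mathbb{F}_{q^m}$, with $q$-degree $d$ if $a_d\neq 0$; $\mathcal{L}_q(x,\mathbb{F}_{q^m})$ is the set of these. Rank distance: $d_R(\mathbf{u},\mathbf{v})=\dim_{\mathbb{F}_q}\langle u_1-v_1,\dots,u_n-v_n\rangle$, $d_R(\mathbf{u},C)=\min_{\mathbf{c}\in C}d_R(\mathbf{u},\mathbf{c})$; a deep hole is a word attaining the covering radius $\max_{\mathbf{u}}d_R(\mathbf{u},C)$, which for $\mathcal{G}$ equals $n-k$. The Gabidulin code of dimension $k$ is $\mathcal{G}=\{(v(g_1),\dots,v(g_n)) : v\in\mathcal{L}_q(x,\mathbb{F}_{q^m}),\ v=0\text{ or }\deg_q(v)<k\}$. *)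

theory Defs
  imports "HOL-Computational_Algebra.Primes" "Jordan_Normal_Form.Determinant"
begin

text \<open>Ambient field F_{q^m} is a finite field type 'a with CARD('a) = q^m.
  The subfield F_q is the fixed field of the Frobenius x -> x^q.\<close>

definition Fq :: "nat \<Rightarrow> 'a::field set" where
  "Fq q = {x. x ^ q = x}"

definition lin_indep_q :: "nat \<Rightarrow> (nat \<Rightarrow> 'a::field) \<Rightarrow> nat \<Rightarrow> bool" where
  "lin_indep_q q v s \<longleftrightarrow>
     (\<forall>c. (\<forall>i<s. c i \<in> Fq q) \<and> (\<Sum>i<s. c i * v i) = 0 \<longrightarrow> (\<forall>i<s. c i = 0))"

definition span_q :: "nat \<Rightarrow> (nat \<Rightarrow> 'a::field) \<Rightarrow> nat \<Rightarrow> 'a set" where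
  "span_q q v s = {(\<Sum>i<s. c i * v i) | c. \<forall>i<s. c i \<in> Fq q}"

definition dim_q :: "nat \<Rightarrow> 'a::field set \<Rightarrow> nat" where
  "dim_q q V = Max {r. \<exists>b. (\<forall>i<r. b i \<in> V) \<and> lin_indep_q q b r}"

definition rank_dist :: "nat \<Rightarrow> nat \<Rightarrow> (nat \<Rightarrow> 'a::field) \<Rightarrow> (nat \<Rightarrow> 'a) \<Rightarrow> nat" where
  "rank_dist q n u v = dim_q q (span_q q (\<lambda>i. u i - v i) n)"

definition lin_eval :: "nat \<Rightarrow> nat \<Rightarrow> (nat \<Rightarrow> 'a::field) \<Rightarrow> 'a \<Rightarrow> 'a" where
  "lin_eval q d a x = (\<Sum>i<d. a i * x ^ (q ^ i))"

text \<open>Words are functions nat => 'a, set to 0 outside 0..n-1.\<close>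
definition gabidulin :: "nat \<Rightarrow> nat \<Rightarrow> nat \<Rightarrow> (nat \<Rightarrow> 'a::field) \<Rightarrow> (nat \<Rightarrow> 'a) set" where
  "gabidulin q k n g = {(\<lambda>i. if i < n then lin_eval q k a (g i) else 0) | a. True}"

definition rank_dist_code :: "nat \<Rightarrow> nat \<Rightarrow> (nat \<Rightarrow> 'a::field) \<Rightarrow> (nat \<Rightarrow> 'a) set \<Rightarrow> nat" where
  "rank_dist_code q n u C = Min (rank_dist q n u ` C)"

text \<open>Moore matrix M_t(beta_1..beta_s): entry (i,j) = beta_j^{q^i}, 0-indexed.\<close>
definition moore :: "nat \<Rightarrow> nat \<Rightarrow> nat \<Rightarrow> (nat \<Rightarrow> 'a::field) \<Rightarrow> 'a mat" where
  "moore q t s \<beta> = mat t s (\<lambda>(i, j). \<beta> j ^ (q ^ i))"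

text \<open>R_k(beta_1..beta_{k+1}): M_{k+2} with the row of exponent q^k deleted.\<close>
definition R_mat :: "nat \<Rightarrow> nat \<Rightarrow> (nat \<Rightarrow> 'a::field) \<Rightarrow> 'a mat" where
  "R_mat q k \<beta> = mat (k+1) (k+1)
     (\<lambda>(i, j). \<beta> j ^ (q ^ (if i < k then i else k + 1)))"

end

theory Submission imports Defs "HOL-Computational_Algebra.Polynomial" begin

lemma of_nat_card_0: "of_nat (card (UNIV::'a::{field,finite} set)) = (0::'a)"
proof -
  have "(\<Sum>x\<in>(UNIV::'a set). x) = (\<Sum>x\<in>UNIV. x + 1)"
    by (rule sum.reindex_bij_witness[of _ "\<lambda>x. x + 1" "\<lambda>x. x - 1"]) auto
  also have "\<dots> = (\<Sum>x\<in>UNIV. x) + of_nat (card (UNIV::'a set))"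
    by (simp add: sum.distrib)
  finally show ?thesis by simp
qed

lemma char_eq:
  assumes "prime p" "r > 0" "m > 0" "card (UNIV::'a::{field,finite} set) = (p^r)^m"
  shows "CHAR('a) = p"
proof -
  have c: "prime CHAR('a)" by (intro prime_CHAR_semidom finite_imp_CHAR_pos) simp
  have "CHAR('a) dvd card (UNIV::'a set)"
    using of_nat_card_0[where 'a='a] of_nat_eq_0_iff_char_dvd by blast
  then have "CHAR('a) dvd p^(r*m)" using assms(4) by (simp add: power_mult)
  then have "CHAR('a) dvd p" using c prime_dvd_power by blast
  then show ?thesis using c assms(1) by (simp add: primes_dvd_imp_eq)
qed

lemma frob_of_pp:
  assumes "prime p" "r > 0" "m > 0" "card (UNIV::'a::{field,finite} set) = (p^r)^m"
  shows "(x + y :: 'a)^(p^r) = x^(p^r) + y^(p^r)"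
  using char_eq[OF assms] freshmans_dream'[where 'a='a] by (metis assms(1))



definition subsp :: "nat \<Rightarrow> 'a::field set \<Rightarrow> bool" where
  "subsp q V \<longleftrightarrow> 0 \<in> V \<and> (\<forall>x\<in>V. \<forall>y\<in>V. x + y \<in> V) \<and> (\<forall>c\<in>Fq q. \<forall>x\<in>V. c * x \<in> V)"

definition linmap :: "nat \<Rightarrow> ('a::field \<Rightarrow> 'a) \<Rightarrow> bool" where
  "linmap q h \<longleftrightarrow> (\<forall>x y. h (x + y) = h x + h y) \<and> (\<forall>c\<in>Fq q. \<forall>x. h (c * x) = c * h x)"

lemma linmap_0: "linmap q h \<Longrightarrow> h 0 = 0"
  unfolding linmap_def by (metis add_cancel_right_right add_0)

lemma linmap_diff: "linmap q h \<Longrightarrow> h (x - y) = h x - h y"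
  unfolding linmap_def by (metis diff_add_cancel eq_diff_eq)

lemma linmap_sum: "linmap q h \<Longrightarrow> (\<forall>j\<in>A. c j \<in> Fq q) \<Longrightarrow> h (\<Sum>j\<in>A. c j * v j) = (\<Sum>j\<in>A. c j * h (v j))"
proof (induction A rule: infinite_finite_induct)
  case (infinite A) then show ?case using linmap_0 by simp
next
  case empty then show ?case using linmap_0 by simp
next
  case (insert x F) then show ?case by (simp add: linmap_def)
qed

lemma fiber_count:
  fixes h :: "'a::ab_group_add \<Rightarrow> 'b::ab_group_add"
  assumes fin: "finite U" and sub: "\<forall>x\<in>U. \<forall>y\<in>U. x - y \<in> U" and add: "\<forall>x\<in>U. \<forall>y\<in>U. x + y \<in> U"
    and hlin: "\<And>x y. h (x - y) = h x - h y"
  shows "card U = card {x\<in>U. h x = 0} * card (h ` U)"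
proof -
  let ?K = "{x\<in>U. h x = 0}"
  let ?F = "\<lambda>y. {x\<in>U. h x = y}"
  have U: "U = (\<Union>y\<in>h ` U. ?F y)" by auto
  have "card (\<Union>y\<in>h ` U. ?F y) = (\<Sum>y\<in>h ` U. card (?F y))"
    by (rule card_UN_disjoint) (use fin in auto)
  also have "\<dots> = (\<Sum>y\<in>h ` U. card ?K)"
  proof (rule sum.cong[OF refl])
    fix y assume "y \<in> h ` U"
    then obtain x0 where x0: "x0 \<in> U" "h x0 = y" by blast
    have hadd: "h (z + x0) = h z + h x0" for z
      using hlin[of "z + x0" x0] by (simp add: algebra_simps)
    have "bij_betw (\<lambda>x. x - x0) (?F y) ?K"
    proof (rule bij_betw_byWitness[where f' = "\<lambda>z. z + x0"])
      show "\<forall>a\<in>?F y. a - x0 + x0 = a" by simp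
      show "\<forall>a'\<in>?K. a' + x0 - x0 = a'" by simp
      show "(\<lambda>x. x - x0) ` ?F y \<subseteq> ?K" using x0 sub hlin by auto
      show "(\<lambda>z. z + x0) ` ?K \<subseteq> ?F y" using x0 add hadd by auto
    qed
    then show "card (?F y) = card ?K" by (rule bij_betw_same_card)
  qed
  also have "\<dots> = card ?K * card (h ` U)" by simp
  finally show ?thesis using U by simp
qed

lemma R_eq:
  fixes \<beta> :: "nat \<Rightarrow> 'a::field" and a' :: "nat \<Rightarrow> 'a"
  assumes van: "\<And>j. j < k+1 \<Longrightarrow> (\<Sum>i<k+2. a' i * \<beta> j^(q^i)) = 0"
    and top: "a' (k+1) = 1" "a' k = - a1"
  shows "det (R_mat q k \<beta>) = a1 * det (moore q (k+1) (k+1) \<beta>)"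
proof -
  define E :: "'a mat" where "E = mat (k+1) (k+1) (\<lambda>(i,l). if i < k then (if l = i then 1 else 0) else (if l < k then - a' l else a1))"
  define M where "M = moore q (k+1) (k+1) \<beta>"
  have EC: "E \<in> carrier_mat (k+1) (k+1)" by (simp add: E_def)
  have MC: "M \<in> carrier_mat (k+1) (k+1)" by (simp add: M_def moore_def)
  have "R_mat q k \<beta> = E * M"
  proof (rule eq_matI)
    fix i j assume i: "i < dim_row (E * M)" and j: "j < dim_col (E * M)"
    then have i': "i < k+1" and j': "j < k+1" using EC MC by auto
    have em: "(E * M) $$ (i,j) = (\<Sum>l<k+1. E $$ (i,l) * \<beta> j^(q^l))"
      using i' j' EC MC by (simp add: scalar_prod_def M_def moore_def atLeast0LessThan)
    show "R_mat q k \<beta> $$ (i,j) = (E * M) $$ (i,j)"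
    proof (cases "i < k")
      case True
      have "(\<Sum>l<k+1. E $$ (i,l) * \<beta> j^(q^l)) = (\<Sum>l<k+1. if l = i then \<beta> j^(q^l) else 0)"
        by (rule sum.cong) (use True in \<open>auto simp: E_def\<close>)
      also have "\<dots> = \<beta> j^(q^i)" using True by simp
      finally show ?thesis using em True i' j' by (simp add: R_mat_def)
    next
      case False
      then have ik: "i = k" using i' by simp
      have "(\<Sum>l<k+1. E $$ (i,l) * \<beta> j^(q^l)) = (\<Sum>l<k. - a' l * \<beta> j^(q^l)) + a1 * \<beta> j^(q^k)"
        using ik by (simp add: E_def)
      also have "\<dots> = \<beta> j^(q^(k+1))"
      proof -
        have "0 = (\<Sum>i<k+2. a' i * \<beta> j^(q^i))" using van j' by simp
        also have "\<dots> = (\<Sum>i<k. a' i * \<beta> j^(q^i)) - a1 * \<beta> j^(q^k) + \<beta> j^(q^(k+1))"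
          using top by (simp add: numeral_2_eq_2)
        finally show ?thesis by (simp add: sum_negf algebra_simps)
      qed
      finally show ?thesis using em ik j' by (simp add: R_mat_def)
    qed
  next
    show "dim_row (R_mat q k \<beta>) = dim_row (E * M)" "dim_col (R_mat q k \<beta>) = dim_col (E * M)"
      using EC MC by (auto simp: R_mat_def)
  qed
  then have "det (R_mat q k \<beta>) = det E * det M" using det_mult[OF EC MC] by simp
  moreover have "det E = a1"
  proof -
    have "det E = prod_list (diag_mat E)"
      by (rule det_lower_triangular[OF _ EC]) (auto simp: E_def)
    also have "\<dots> = (\<Prod>i = 0..<k+1. E $$ (i,i))" using EC by (simp add: prod_list_diag_prod)
    also have "\<dots> = (\<Prod>i = 0..<k. E $$ (i,i)) * E $$ (k,k)" by simp
    also have "(\<Prod>i = 0..<k. E $$ (i,i)) = 1" by (rule prod.neutral) (auto simp: E_def)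
    finally show ?thesis by (simp add: E_def)
  qed
  ultimately show ?thesis by (simp add: M_def)
qed

definition Bm :: "nat \<Rightarrow> nat \<Rightarrow> (nat \<Rightarrow> 'a::field) \<Rightarrow> 'a \<Rightarrow> 'a mat" where
  "Bm q k \<beta> x = mat (k+2) (k+2) (\<lambda>(i,j). (if j < k+1 then \<beta> j else x)^(q^i))"

lemma Bm_carrier: "Bm q k \<beta> x \<in> carrier_mat (k+2) (k+2)" by (simp add: Bm_def)

lemma Bm_delete: "mat_delete (Bm q k \<beta> x) i (k+1) = mat_delete (Bm q k \<beta> 0) i (k+1)"
  by (rule eq_matI) (auto simp: mat_delete_def Bm_def)

lemma Bm_expand:
  "det (Bm q k \<beta> x) = (\<Sum>i<k+2. x^(q^i) * cofactor (Bm q k \<beta> 0) i (k+1))"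
proof -
  have "det (Bm q k \<beta> x) = (\<Sum>i<k+2. Bm q k \<beta> x $$ (i,k+1) * cofactor (Bm q k \<beta> x) i (k+1))"
    by (rule laplace_expansion_column[OF Bm_carrier]) simp
  also have "\<dots> = (\<Sum>i<k+2. x^(q^i) * cofactor (Bm q k \<beta> 0) i (k+1))"
  proof (rule sum.cong[OF refl])
    fix i assume "i \<in> {..<k+2}"
    then have "Bm q k \<beta> x $$ (i,k+1) = x^(q^i)" by (simp add: Bm_def)
    moreover have "cofactor (Bm q k \<beta> x) i (k+1) = cofactor (Bm q k \<beta> 0) i (k+1)"
      unfolding cofactor_def by (simp only: Bm_delete[of q k \<beta> x])
    ultimately show "Bm q k \<beta> x $$ (i,k+1) * cofactor (Bm q k \<beta> x) i (k+1) = x^(q^i) * cofactor (Bm q k \<beta> 0) i (k+1)"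
      by simp
  qed
  finally show ?thesis .
qed

lemma Bm_top: "cofactor (Bm q k \<beta> 0) (k+1) (k+1) = det (moore q (k+1) (k+1) \<beta>)"
proof -
  have "mat_delete (Bm q k \<beta> 0) (k+1) (k+1) = moore q (k+1) (k+1) \<beta>"
    by (rule eq_matI) (auto simp: mat_delete_def Bm_def moore_def)
  moreover have "(-1::'a)^(k+1+(k+1)) = 1" by (simp add: power_add flip: power_mult_distrib)
  ultimately show ?thesis by (simp add: cofactor_def)
qed

lemma Bm_k: "cofactor (Bm q k \<beta> 0) k (k+1) = - det (R_mat q k \<beta>)"
proof -
  have "mat_delete (Bm q k \<beta> 0) k (k+1) = R_mat q k \<beta>"
    by (rule eq_matI) (auto simp: mat_delete_def Bm_def R_mat_def less_Suc_eq)
  moreover have "(-1::'a)^(k+(k+1)) = -1"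
    by (simp add: power_add flip: power_mult_distrib)
  ultimately show ?thesis by (simp add: cofactor_def)
qed

lemma Bm_van: "j < k+1 \<Longrightarrow> det (Bm q k \<beta> (\<beta> j)) = 0"
  by (rule det_identical_columns[OF Bm_carrier, of j "k+1"]) (auto simp: Bm_def)

lemma interp:
  fixes g :: "nat \<Rightarrow> 'a::field"
  assumes d: "det (moore q k k g) \<noteq> 0"
  shows "\<exists>a. \<forall>l<k. lin_eval q k a (g l) = b l"
proof -
  define A where "A = moore q k k g"
  define D where "D = det A"
  have AC: "A \<in> carrier_mat k k" by (simp add: A_def moore_def)
  have adj: "adj_mat A * A = D \<cdot>\<^sub>m 1\<^sub>m k" using adj_mat(3)[OF AC] by (simp add: D_def)
  have adjC: "adj_mat A \<in> carrier_mat k k" using adj_mat(1)[OF AC] .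
  have ent: "(\<Sum>i<k. adj_mat A $$ (j,i) * A $$ (i,l)) = (if j = l then D else 0)" if "j < k" "l < k" for j l
  proof -
    have "(\<Sum>i<k. adj_mat A $$ (j,i) * A $$ (i,l)) = (adj_mat A * A) $$ (j,l)"
      using that AC adjC by (simp add: scalar_prod_def atLeast0LessThan)
    also have "\<dots> = (D \<cdot>\<^sub>m 1\<^sub>m k) $$ (j,l)" using adj by simp
    also have "\<dots> = (if j = l then D else 0)" using that by simp
    finally show ?thesis .
  qed
  define a where "a = (\<lambda>i. (\<Sum>j<k. b j * adj_mat A $$ (j,i)) / D)"
  show ?thesis
  proof (intro exI allI impI)
    fix l assume l: "l < k"
    have "lin_eval q k a (g l) = (\<Sum>i<k. a i * A $$ (i,l))"
      using l by (simp add: lin_eval_def A_def moore_def)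
    also have "\<dots> = (\<Sum>i<k. \<Sum>j<k. b j * adj_mat A $$ (j,i) * A $$ (i,l)) / D"
      by (simp add: a_def sum_divide_distrib sum_distrib_right)
    also have "(\<Sum>i<k. \<Sum>j<k. b j * adj_mat A $$ (j,i) * A $$ (i,l)) = (\<Sum>j<k. b j * (\<Sum>i<k. adj_mat A $$ (j,i) * A $$ (i,l)))"
      by (subst sum.swap) (simp add: sum_distrib_left mult_ac)
    also have "\<dots> = (\<Sum>j<k. b j * (if j = l then D else 0))"
      by (rule sum.cong) (simp_all add: ent l)
    also have "\<dots> = b l * D" using l by (simp add: if_distrib cong: if_cong)
    finally show "lin_eval q k a (g l) = b l" using d by (simp add: D_def A_def)
  qed
qed

context
  fixes q :: nat
  assumes q2: "2 \<le> q"
  and frob: "\<And>x y :: 'a::{field,finite}. (x + y)^q = x^q + y^q"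
begin

lemma frob_pow: "(x + y :: 'a)^(q^i) = x^(q^i) + y^(q^i)"
proof (induction i)
  case (Suc i)
  have "(x + y)^(q^Suc i) = ((x + y)^(q^i))^q" by (simp only: power_Suc2 power_mult)
  also have "\<dots> = (x^(q^i))^q + (y^(q^i))^q" by (simp only: Suc frob)
  also have "\<dots> = x^(q^Suc i) + y^(q^Suc i)" by (simp only: power_Suc2 power_mult)
  finally show ?case .
qed simp

lemma frob_pow': "(x + y :: 'a)^(q^i) = x^(q^i) + y^(q^i)"
  by (rule frob_pow)

lemma pow_sum: "(\<Sum>j\<in>A. f j :: 'a)^(q^i) = (\<Sum>j\<in>A. f j ^ (q^i))"
proof (induction A rule: infinite_finite_induct)
  case (infinite A) then show ?case using q2 by simp
next
  case empty then show ?case using q2 by simp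
next
  case (insert x F) then show ?case by (simp add: frob_pow)
qed

lemma pow_diff: "(x - y :: 'a)^(q^i) = x^(q^i) - y^(q^i)"
  by (metis diff_add_cancel eq_diff_eq frob_pow)

lemma Fq_pow: "c \<in> Fq q \<Longrightarrow> (c::'a)^(q^i) = c"
proof (induction i)
  case (Suc i) then show ?case by (simp add: Fq_def power_mult power_Suc2)
qed simp

lemma Fq_0: "(0::'a) \<in> Fq q" using q2 by (simp add: Fq_def)
lemma Fq_1: "(1::'a) \<in> Fq q" by (simp add: Fq_def)
lemma Fq_add: "c \<in> Fq q \<Longrightarrow> d \<in> Fq q \<Longrightarrow> (c + d::'a) \<in> Fq q" by (simp add: Fq_def frob)
lemma Fq_diff: "c \<in> Fq q \<Longrightarrow> d \<in> Fq q \<Longrightarrow> (c - d::'a) \<in> Fq q"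
  using pow_diff[of c d 1] by (simp add: Fq_def)
lemma Fq_mult: "c \<in> Fq q \<Longrightarrow> d \<in> Fq q \<Longrightarrow> (c * d::'a) \<in> Fq q" by (simp add: Fq_def power_mult_distrib)
lemma Fq_uminus: "c \<in> Fq q \<Longrightarrow> (- c::'a) \<in> Fq q" using Fq_diff[OF Fq_0] by fastforce
lemma Fq_inverse: "c \<in> Fq q \<Longrightarrow> (inverse c::'a) \<in> Fq q" by (simp add: Fq_def power_inverse)

lemma linmap_lin_eval: "linmap q (lin_eval q s a :: 'a \<Rightarrow> 'a)"
  unfolding linmap_def lin_eval_def
  by (auto simp: frob_pow power_mult_distrib Fq_pow sum.distrib distrib_left sum_distrib_left mult_ac)


lemma roots_bound:
  assumes i0: "i0 < s" "a i0 \<noteq> (0::'a)"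
  shows "card {x::'a. lin_eval q s a x = 0} \<le> q^(s-1)"
proof -
  define P where "P = (\<Sum>i<s. monom (a i) (q^i))"
  have ev: "poly P x = lin_eval q s a x" for x
    by (simp add: P_def lin_eval_def poly_sum poly_monom)
  have inj: "q^i = q^j \<longleftrightarrow> i = j" for i j using q2 by (simp add: power_inject_exp)
  have "coeff P (q^i0) = (\<Sum>i<s. if q^i = q^i0 then a i else 0)"
    by (simp add: P_def coeff_sum)
  also have "\<dots> = a i0" using i0 by (simp add: inj)
  finally have "P \<noteq> 0" using i0 by auto
  have "degree P \<le> q^(s-1)" unfolding P_def
  proof (rule degree_sum_le)
    fix i assume "i \<in> {..<s}"
    then have "q^i \<le> q^(s-1)" using q2 by (intro power_increasing) auto
    then show "degree (monom (a i) (q^i)) \<le> q^(s-1)" using degree_monom_le order_trans by blast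
  qed simp
  moreover have "card {x. poly P x = 0} \<le> degree P" by (rule card_poly_roots_bound) fact
  ultimately show ?thesis by (simp add: ev)
qed

lemma span_eq_image: "span_q q v s = (\<lambda>c. \<Sum>i<s. c i * v i) ` (PiE {..<s} (\<lambda>_. Fq q :: 'a set))"
proof safe
  fix x assume "x \<in> span_q q v s"
  then obtain c where c: "\<forall>i<s. c i \<in> Fq q" "x = (\<Sum>i<s. c i * v i)" by (auto simp: span_q_def)
  define d where "d = (\<lambda>i. if i < s then c i else undefined)"
  have "d \<in> PiE {..<s} (\<lambda>_. Fq q)" using c by (auto simp: d_def PiE_def extensional_def)
  moreover have "x = (\<Sum>i<s. d i * v i)" using c by (simp add: d_def)
  ultimately show "x \<in> (\<lambda>c. \<Sum>i<s. c i * v i) ` (PiE {..<s} (\<lambda>_. Fq q))" by blast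
next
  fix c assume "c \<in> PiE {..<s} (\<lambda>_. Fq q :: 'a set)"
  then show "(\<Sum>i<s. c i * v i) \<in> span_q q v s" by (auto simp: span_q_def)
qed

lemma indep_inj:
  assumes "lin_indep_q q v s"
  shows "inj_on (\<lambda>c. \<Sum>i<s. c i * v i) (PiE {..<s} (\<lambda>_. Fq q :: 'a set))"
proof (rule inj_onI)
  fix c d assume c: "c \<in> PiE {..<s} (\<lambda>_. Fq q :: 'a set)" and d: "d \<in> PiE {..<s} (\<lambda>_. Fq q :: 'a set)"
    and eq: "(\<Sum>i<s. c i * v i) = (\<Sum>i<s. d i * v i)"
  have "(\<Sum>i<s. (c i - d i) * v i) = 0"
    using eq by (simp add: left_diff_distrib sum_subtractf)
  moreover have "\<forall>i<s. c i - d i \<in> Fq q"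
  proof (intro allI impI)
    fix i assume "i < s"
    then have "c i \<in> Fq q" "d i \<in> Fq q" using c d by (auto simp: PiE_iff)
    then show "c i - d i \<in> Fq q" by (rule Fq_diff)
  qed
  ultimately have z: "\<forall>i<s. c i - d i = 0"
    using mp[OF spec[OF assms[unfolded lin_indep_q_def], of "\<lambda>i. c i - d i"]] by blast
  show "c = d"
  proof (rule PiE_ext[OF c d])
    fix i assume "i \<in> {..<s}"
    then show "c i = d i" using z by simp
  qed
qed

lemma card_span: "lin_indep_q q (v::nat \<Rightarrow> 'a) s \<Longrightarrow> card (span_q q v s) = card (Fq q :: 'a set)^s"
proof -
  assume ind: "lin_indep_q q v s"
  have "card (span_q q v s) = card (PiE {..<s} (\<lambda>_. Fq q :: 'a set))"
    unfolding span_eq_image by (rule card_image[OF indep_inj[OF ind]])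
  also have "\<dots> = (\<Prod>i<s. card (Fq q :: 'a set))" by (rule card_PiE) simp
  also have "\<dots> = card (Fq q :: 'a set)^s" by simp
  finally show ?thesis .
qed

lemma subsp_span: "subsp q (span_q q (v::nat \<Rightarrow> 'a) s)"
  unfolding subsp_def
proof safe
  show "0 \<in> span_q q v s" unfolding span_q_def using Fq_0
    by (auto intro!: exI[of _ "\<lambda>_. 0"])
next
  fix x y assume "x \<in> span_q q v s" "y \<in> span_q q v s"
  then obtain c d where "\<forall>i<s. c i \<in> Fq q" "x = (\<Sum>i<s. c i * v i)"
    "\<forall>i<s. d i \<in> Fq q" "y = (\<Sum>i<s. d i * v i)" by (auto simp: span_q_def)
  then show "x + y \<in> span_q q v s" unfolding span_q_def
    by (auto intro!: exI[of _ "\<lambda>i. c i + d i"] Fq_add simp: sum.distrib distrib_right)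
next
  fix e x :: 'a assume e: "e \<in> Fq q" and "x \<in> span_q q v s"
  then obtain c where "\<forall>i<s. c i \<in> Fq q" "x = (\<Sum>i<s. c i * v i)" by (auto simp: span_q_def)
  then show "e * x \<in> span_q q v s" unfolding span_q_def using e
    by (auto intro!: exI[of _ "\<lambda>i. e * c i"] Fq_mult simp: sum_distrib_left mult_ac)
qed

lemma span_mem: "i < s \<Longrightarrow> (v::nat \<Rightarrow> 'a) i \<in> span_q q v (s::nat)"
proof -
  assume i: "i < s"
  have "(\<Sum>j<s. (if j = i then 1 else 0) * v j) = (\<Sum>j<s. if j = i then v j else 0)"
    by (rule sum.cong) auto
  also have "\<dots> = v i" using i by simp
  finally show ?thesis unfolding span_q_def using Fq_0 Fq_1
    by (intro CollectI exI[of _ "\<lambda>j. if j = i then 1 else 0"]) auto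
qed

lemma subsp_sum: "subsp q V \<Longrightarrow> (\<forall>i\<in>A. c i \<in> Fq q \<and> v i \<in> V) \<Longrightarrow> (\<Sum>i\<in>A. c i * v i :: 'a) \<in> V"
proof (induction A rule: infinite_finite_induct)
  case (insert x F)
  then have "c x * v x \<in> V" "(\<Sum>i\<in>F. c i * v i) \<in> V" unfolding subsp_def by auto
  then show ?case using insert(1,2) insert.prems(1) unfolding subsp_def by simp
qed (auto simp: subsp_def)

lemma span_sub: "subsp q V \<Longrightarrow> \<forall>i<s. v i \<in> V \<Longrightarrow> span_q q v s \<subseteq> (V::'a set)"
proof
  fix x assume V: "subsp q V" and vs: "\<forall>i<s. v i \<in> V" and "x \<in> span_q q v s"
  then obtain c where c: "\<forall>i<s. c i \<in> Fq q" "x = (\<Sum>i<s. c i * v i)" by (auto simp: span_q_def)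
  have "(\<Sum>i\<in>{..<s}. c i * v i) \<in> V" by (rule subsp_sum[OF V]) (use c vs in auto)
  then show "x \<in> V" using c by simp
qed

lemma Q2: "2 \<le> card (Fq q :: 'a set)"
proof -
  have "{0,1} \<subseteq> (Fq q :: 'a set)" using Fq_0 Fq_1 by auto
  then have "card {0,(1::'a)} \<le> card (Fq q :: 'a set)" by (intro card_mono) auto
  then show ?thesis by simp
qed

lemma indep_card_le: "subsp q V \<Longrightarrow> \<forall>i<r. b i \<in> V \<Longrightarrow> lin_indep_q q b r \<Longrightarrow> card (Fq q :: 'a set)^r \<le> card (V::'a set)"
proof -
  assume V: "subsp q V" and b: "\<forall>i<r. b i \<in> V" and ind: "lin_indep_q q b r"
  have "card (Fq q :: 'a set)^r = card (span_q q b r)" using card_span[OF ind] by simp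
  also have "\<dots> \<le> card V" using span_sub[OF V b] by (intro card_mono) auto
  finally show ?thesis .
qed

lemma indep_ext:
  assumes V: "subsp q (V::'a set)" and b: "\<forall>i<r. b i \<in> V" "lin_indep_q q b r"
    and lt: "card (Fq q :: 'a set)^r < card V"
  shows "\<exists>b'. (\<forall>i<Suc r. b' i \<in> V) \<and> lin_indep_q q b' (Suc r)"
proof -
  have "\<not> V \<subseteq> span_q q b r"
  proof
    assume "V \<subseteq> span_q q b r"
    then have "card V \<le> card (span_q q b r)" by (intro card_mono) auto
    then show False using lt card_span[OF b(2)] by simp
  qed
  then obtain x where x: "x \<in> V" "x \<notin> span_q q b r" by blast
  define b' where "b' = b(r := x)"
  have b'r: "\<forall>i<r. b' i = b i" "b' r = x" by (simp_all add: b'_def)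
  have "lin_indep_q q b' (Suc r)" unfolding lin_indep_q_def
  proof (rule allI, rule impI)
    fix c assume c: "(\<forall>i<Suc r. c i \<in> Fq q) \<and> (\<Sum>i<Suc r. c i * b' i) = 0"
    have "(\<Sum>i<Suc r. c i * b' i) = (\<Sum>i<r. c i * b' i) + c r * b' r" by (rule sum.lessThan_Suc)
    also have "(\<Sum>i<r. c i * b' i) = (\<Sum>i<r. c i * b i)" by (rule sum.cong) (simp_all add: b'r)
    finally have sum: "(\<Sum>i<r. c i * b i) + c r * x = 0" using c b'r by simp
    have cF: "\<forall>i<r. c i \<in> Fq q" using c by simp
    have cr: "c r = 0"
    proof (rule ccontr)
      assume nz: "c r \<noteq> 0"
      have e1: "c r * x = - (\<Sum>i<r. c i * b i)" using sum by (simp add: eq_neg_iff_add_eq_0 add.commute)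
      have e2: "x = (c r * x) / c r" using nz by simp
      have "x = - (\<Sum>i<r. c i * b i) / c r" using e1 e2 by simp
      also have "\<dots> = (\<Sum>i<r. - (c i * b i) / c r)" by (simp add: sum_divide_distrib sum_negf)
      also have "\<dots> = (\<Sum>i<r. (- c i / c r) * b i)" by (rule sum.cong) simp_all
      finally have xe: "x = (\<Sum>i<r. (- c i / c r) * b i)" .
      have "c r \<in> Fq q" using c by simp
      then have ci: "inverse (c r) \<in> Fq q" by (rule Fq_inverse)
      have "\<forall>i<r. - c i / c r \<in> Fq q"
      proof (intro allI impI)
        fix i assume "i < r"
        then have "- c i \<in> Fq q" using cF Fq_uminus by blast
        then have "- c i * inverse (c r) \<in> Fq q" using ci by (rule Fq_mult)
        then show "- c i / c r \<in> Fq q" by (simp add: divide_inverse)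
      qed
      then have "\<exists>c'. x = (\<Sum>i<r. c' i * b i) \<and> (\<forall>i<r. c' i \<in> Fq q)"
        using xe by (intro exI[of _ "\<lambda>i. - c i / c r"]) simp
      then have "x \<in> span_q q b r" unfolding span_q_def by blast
      with x show False by simp
    qed
    then have "(\<Sum>i<r. c i * b i) = 0" using sum by simp
    then have "\<forall>i<r. c i = 0" using mp[OF spec[OF b(2)[unfolded lin_indep_q_def], of c]] cF by blast
    with cr show "\<forall>i<Suc r. c i = 0" using less_Suc_eq by auto
  qed
  moreover have "\<forall>i<Suc r. b' i \<in> V" using b x b'r less_Suc_eq by auto
  ultimately show ?thesis by blast
qed

lemma exists_indep:
  assumes V: "subsp q (V::'a set)"
  shows "card (Fq q :: 'a set)^r \<le> card V \<Longrightarrow> \<exists>b. (\<forall>i<r. b i \<in> V) \<and> lin_indep_q q b r"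
proof (induction r)
  case 0 then show ?case by (auto simp: lin_indep_q_def)
next
  case (Suc r)
  have "card (Fq q :: 'a set)^r < card (Fq q :: 'a set)^Suc r" using Q2 by simp
  with Suc.prems have lt: "card (Fq q :: 'a set)^r < card V" by linarith
  then obtain b where "(\<forall>i<r. b i \<in> V) \<and> lin_indep_q q b r" using Suc.IH by fastforce
  then show ?case using indep_ext[OF V _ _ lt] by blast
qed

lemma dim_ge_iff:
  assumes V: "subsp q (V::'a set)"
  shows "r \<le> dim_q q V \<longleftrightarrow> card (Fq q :: 'a set)^r \<le> card V"
proof -
  let ?Q = "card (Fq q :: 'a set)"
  define S where "S = {r. \<exists>b. (\<forall>i<r. b i \<in> V) \<and> lin_indep_q q b r}"
  have S_le: "?Q^r \<le> card V" if "r \<in> S" for r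
  proof -
    obtain b where "\<forall>i<r. b i \<in> V" "lin_indep_q q b r" using \<open>r \<in> S\<close> unfolding S_def by blast
    then show ?thesis by (rule indep_card_le[OF V])
  qed
  have "S \<subseteq> {..card V}"
  proof
    fix r assume "r \<in> S"
    have "r < 2^r" by (rule less_exp)
    also have "\<dots> \<le> ?Q^r" using Q2 by (rule power_mono) simp
    also have "\<dots> \<le> card V" using S_le \<open>r \<in> S\<close> by blast
    finally show "r \<in> {..card V}" by simp
  qed
  then have fin: "finite S" by (rule finite_subset) simp
  have "0 \<in> S" by (auto simp: S_def lin_indep_q_def)
  then have MS: "Max S \<in> S" using fin by (intro Max_in) auto
  have dq: "dim_q q V = Max S" by (simp add: dim_q_def S_def)
  show ?thesis
  proof
    assume "r \<le> dim_q q V"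
    then have "?Q^r \<le> ?Q^(Max S)" using Q2 dq by (intro power_increasing) auto
    also have "\<dots> \<le> card V" using S_le MS by blast
    finally show "?Q^r \<le> card V" .
  next
    assume "?Q^r \<le> card V"
    then obtain b where "\<forall>i<r. b i \<in> V" "lin_indep_q q b r" using exists_indep[OF V] by blast
    then have "r \<in> S" unfolding S_def by blast
    then show "r \<le> dim_q q V" using fin dq by simp
  qed
qed

lemma dim_le_card: "subsp q (V::'a set) \<Longrightarrow> dim_q q V \<le> card V"
proof -
  assume V: "subsp q V"
  have "dim_q q V < 2^dim_q q V" by (rule less_exp)
  also have "\<dots> \<le> card (Fq q :: 'a set)^dim_q q V" using Q2 by (rule power_mono) simp
  also have "\<dots> \<le> card V" using dim_ge_iff[OF V, of "dim_q q V"] by simp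
  finally show ?thesis by simp
qed

lemma linmap_image_span:
  assumes "linmap q h"
  shows "h ` span_q q (v::nat \<Rightarrow> 'a) s = span_q q (\<lambda>i. h (v i)) s"
proof safe
  fix x assume "x \<in> span_q q v s"
  then obtain c where c: "\<forall>i<s. c i \<in> Fq q" "x = (\<Sum>i<s. c i * v i)" by (auto simp: span_q_def)
  have "h x = (\<Sum>i<s. c i * h (v i))" using linmap_sum[OF assms, of "{..<s}" c v] c by simp
  then have "\<exists>c'. h x = (\<Sum>i<s. c' i * h (v i)) \<and> (\<forall>i<s. c' i \<in> Fq q)" using c by blast
  then show "h x \<in> span_q q (\<lambda>i. h (v i)) s" unfolding span_q_def by blast
next
  fix y assume "y \<in> span_q q (\<lambda>i. h (v i)) s"
  then obtain c where c: "\<forall>i<s. c i \<in> Fq q" "y = (\<Sum>i<s. c i * h (v i))" by (auto simp: span_q_def)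
  have "h (\<Sum>i<s. c i * v i) = y" using linmap_sum[OF assms, of "{..<s}" c v] c by simp
  moreover have "(\<Sum>i<s. c i * v i) \<in> span_q q v s" unfolding span_q_def using c(1) by blast
  ultimately show "y \<in> h ` span_q q v s" by (metis image_eqI)
qed

lemma subsp_ker:
  assumes "subsp q (V::'a set)" "linmap q h"
  shows "subsp q {x\<in>V. h x = 0}"
  using assms linmap_0[OF assms(2)] unfolding subsp_def linmap_def by auto

lemma subsp_diff: "subsp q (V::'a set) \<Longrightarrow> x \<in> V \<Longrightarrow> y \<in> V \<Longrightarrow> x - y \<in> V"
proof -
  assume V: "subsp q V" "x \<in> V" "y \<in> V"
  have "(-1::'a) \<in> Fq q" using Fq_uminus[OF Fq_1] .
  then have "(-1) * y \<in> V" using V unfolding subsp_def by blast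
  then have "x + (-1) * y \<in> V" using V unfolding subsp_def by blast
  then show ?thesis by simp
qed

context
  fixes m :: nat
  assumes m1: "1 \<le> m" and cardU: "card (UNIV :: 'a set) = q^m"
begin

lemma pow_card: "(x::'a) ^ (q^m) = x"
proof (cases "x = 0")
  case False
  have "x * (\<Prod>y\<in>UNIV-{0}. x * y) = x * x ^ (card (UNIV :: 'a set) - 1) * \<Prod>(UNIV-{0})"
    by (simp add: prod.distrib mult_ac)
  also have "x * x ^ (card (UNIV :: 'a set) - 1) = x ^ Suc (card (UNIV :: 'a set) - 1)"
    by (subst power_Suc) auto
  also have "Suc (card (UNIV :: 'a set) - 1) = card (UNIV :: 'a set)"
    using finite_UNIV_card_ge_0[where ?'a = 'a] by simp
  also have "(\<Prod>y\<in>UNIV-{0}. x * y) = (\<Prod>y\<in>UNIV-{0}. y)"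
    by (rule prod.reindex_bij_witness[of _ "\<lambda>y. y / x" "\<lambda>y. x * y"]) (use False in auto)
  finally show ?thesis
    by (simp add: cardU)
next
  case True then show ?thesis using q2 by simp
qed

lemma card_Fq: "card (Fq q :: 'a set) = q"
proof -
  define a :: "nat \<Rightarrow> 'a" where "a = (\<lambda>i. if i = 0 then -1 else 1)"
  have phi: "lin_eval q 2 a x = x^q - x" for x
    by (simp add: lin_eval_def a_def numeral_2_eq_2)
  have Fq_eq: "Fq q = {x::'a. lin_eval q 2 a x = 0}" by (simp add: Fq_def phi)
  have le: "card (Fq q :: 'a set) \<le> q"
    using roots_bound[of 0 2 a] unfolding Fq_eq by (simp add: a_def)
  have cnt: "card (UNIV::'a set) = card {x\<in>UNIV. lin_eval q 2 a x = 0} * card (range (lin_eval q 2 a))"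
    by (rule fiber_count) (auto simp: linmap_diff[OF linmap_lin_eval])
  have img: "range (lin_eval q 2 a) \<subseteq> {y::'a. lin_eval q m (\<lambda>_. 1) y = 0}"
  proof safe
    fix x :: 'a
    have T: "lin_eval q m (\<lambda>_. 1) y = (\<Sum>j<m. y^(q^j))" for y :: 'a
      by (simp add: lin_eval_def)
    have "lin_eval q m (\<lambda>_. 1) (lin_eval q 2 a x) = (\<Sum>j<m. (x^q - x)^(q^j))"
      by (simp only: T phi)
    also have "\<dots> = (\<Sum>j<m. x^(q^Suc j) - x^(q^j))"
      by (rule sum.cong) (simp_all add: pow_diff power_Suc power_mult[symmetric])
    also have "\<dots> = x^(q^m) - x^(q^0)" by (rule sum_lessThan_telescope)
    also have "\<dots> = x^(q^m) - x" by simp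
    also have "\<dots> = 0" by (simp add: pow_card)
    finally show "lin_eval q m (\<lambda>_. 1) (lin_eval q 2 a x) = 0" .
  qed
  have "card (range (lin_eval q 2 a)) \<le> card {y::'a. lin_eval q m (\<lambda>_. 1) y = 0}"
    by (rule card_mono[OF _ img]) simp
  also have "\<dots> \<le> q^(m-1)" using roots_bound[of 0 m "\<lambda>_. 1"] m1 by simp
  finally have imgle: "card (range (lin_eval q 2 a)) \<le> q^(m-1)" .
  have "q * q^(m-1) = card (Fq q :: 'a set) * card (range (lin_eval q 2 a))"
    using cnt cardU Fq_eq m1 by (simp flip: power_Suc)
  also have "\<dots> \<le> card (Fq q :: 'a set) * q^(m-1)" using imgle by simp
  finally have "q \<le> card (Fq q :: 'a set)" using q2 by simp
  with le show ?thesis by simp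
qed

lemma moore_nz:
  assumes ind: "lin_indep_q q (\<beta>::nat \<Rightarrow> 'a) s"
  shows "det (moore q s s \<beta>) \<noteq> 0"
proof
  assume d0: "det (moore q s s \<beta>) = 0"
  let ?M = "moore q s s \<beta>"
  have MC: "?M \<in> carrier_mat s s" by (simp add: moore_def)
  have "det (transpose_mat ?M) = 0" using d0 det_transpose[OF MC] by simp
  then obtain v where v: "v \<in> carrier_vec s" "v \<noteq> 0\<^sub>v s" "transpose_mat ?M *\<^sub>v v = 0\<^sub>v s"
    using det_0_iff_vec_prod_zero_field[of "transpose_mat ?M" s] MC by auto
  obtain i0 where i0: "i0 < s" "v $ i0 \<noteq> 0"
  proof -
    have "\<not> (\<forall>i<s. v $ i = 0)"
    proof
      assume "\<forall>i<s. v $ i = 0"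
      then have "v = 0\<^sub>v s" using v(1) by (intro eq_vecI) auto
      with v(2) show False by simp
    qed
    then show ?thesis using that by blast
  qed
  define a where "a = (\<lambda>i. v $ i)"
  have van: "lin_eval q s a (\<beta> j) = 0" if j: "j < s" for j
  proof -
    have "(transpose_mat ?M *\<^sub>v v) $ j = 0" using v(3) j by simp
    moreover have "(transpose_mat ?M *\<^sub>v v) $ j = (\<Sum>i<s. \<beta> j^(q^i) * v $ i)"
      using j v(1) MC by (simp add: scalar_prod_def atLeast0LessThan moore_def)
    ultimately show ?thesis by (simp add: lin_eval_def a_def mult.commute)
  qed
  have "lin_eval q s a ` span_q q \<beta> s = span_q q (\<lambda>i. lin_eval q s a (\<beta> i)) s"
    by (rule linmap_image_span[OF linmap_lin_eval])
  also have "\<dots> \<subseteq> {0}"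
  proof
    fix y assume "y \<in> span_q q (\<lambda>i. lin_eval q s a (\<beta> i)) s"
    then obtain c where "y = (\<Sum>i<s. c i * lin_eval q s a (\<beta> i))" by (auto simp: span_q_def)
    then show "y \<in> {0}" using van by simp
  qed
  finally have "span_q q \<beta> s \<subseteq> {x. lin_eval q s a x = 0}" by blast
  then have "card (span_q q \<beta> s) \<le> card {x. lin_eval q s a x = 0}" by (intro card_mono) auto
  also have "\<dots> \<le> q^(s-1)" using roots_bound[of i0 s a] i0 by (simp add: a_def)
  finally have "q^s \<le> q^(s-1)" using card_span[OF ind] card_Fq by simp
  moreover have "q^(s-1) < q^s" using q2 i0 by (intro power_strict_increasing) auto
  ultimately show False by simp
qed

lemma rank_upper:
  assumes g: "lin_indep_q q (g::nat \<Rightarrow> 'a) n" and h: "linmap q h"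
    and K: "\<forall>i<t. \<beta> i \<in> span_q q g n \<and> h (\<beta> i) = 0" and Kind: "lin_indep_q q \<beta> t"
    and tn: "t \<le> n"
  shows "dim_q q (span_q q (\<lambda>i. h (g i)) n) \<le> n - t"
proof -
  let ?U = "span_q q g n"
  let ?K = "{x\<in>?U. h x = 0}"
  let ?W = "span_q q (\<lambda>i. h (g i)) n"
  have W: "?W = h ` ?U" using linmap_image_span[OF h] by simp
  have cU: "card ?U = q^n" using card_span[OF g] card_Fq by simp
  have cnt: "card ?U = card ?K * card (h ` ?U)"
  proof (rule fiber_count)
    show "\<forall>x\<in>?U. \<forall>y\<in>?U. x - y \<in> ?U" using subsp_diff[OF subsp_span] by blast
    show "\<forall>x\<in>?U. \<forall>y\<in>?U. x + y \<in> ?U" using subsp_span unfolding subsp_def by blast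
    show "h (x - y) = h x - h y" for x y by (rule linmap_diff[OF h])
  qed simp
  have "q^t \<le> card ?K"
    using indep_card_le[OF subsp_ker[OF subsp_span h], of t \<beta>] K Kind card_Fq by simp
  then have "q^t * card ?W \<le> q^t * q^(n-t)"
    using cnt cU W tn by (metis mult_le_mono1 le_add_diff_inverse power_add)
  then have cW: "card ?W \<le> q^(n-t)" using q2 by simp
  show ?thesis
  proof (rule ccontr)
    assume "\<not> ?thesis"
    then have "Suc (n-t) \<le> dim_q q ?W" by simp
    then have A: "q^Suc (n-t) \<le> card ?W" using dim_ge_iff[OF subsp_span] card_Fq by simp
    have B: "q^(n-t) < q^Suc (n-t)" by (rule power_strict_increasing) (use q2 in auto)
    show False using A B cW by linarith
  qed
qed

lemma rank_lower:
  assumes g: "lin_indep_q q (g::nat \<Rightarrow> 'a) n" and h: "linmap q h" and kn: "k < n"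
    and lt: "dim_q q (span_q q (\<lambda>i. h (g i)) n) < n - k"
  shows "\<exists>\<beta>. (\<forall>i<Suc k. \<beta> i \<in> span_q q g n \<and> h (\<beta> i) = 0) \<and> lin_indep_q q \<beta> (Suc k)"
proof -
  let ?U = "span_q q g n"
  let ?K = "{x\<in>?U. h x = 0}"
  let ?W = "span_q q (\<lambda>i. h (g i)) n"
  have W: "?W = h ` ?U" using linmap_image_span[OF h] by simp
  have cU: "card ?U = q^n" using card_span[OF g] card_Fq by simp
  have cnt: "card ?U = card ?K * card (h ` ?U)"
  proof (rule fiber_count)
    show "\<forall>x\<in>?U. \<forall>y\<in>?U. x - y \<in> ?U" using subsp_diff[OF subsp_span] by blast
    show "\<forall>x\<in>?U. \<forall>y\<in>?U. x + y \<in> ?U" using subsp_span unfolding subsp_def by blast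
    show "h (x - y) = h x - h y" for x y by (rule linmap_diff[OF h])
  qed simp
  have iff: "(n-k \<le> dim_q q ?W) = (q^(n-k) \<le> card ?W)"
    using dim_ge_iff[OF subsp_span, of "n-k" "\<lambda>i. h (g i)" n] card_Fq by simp
  have cW: "card ?W < q^(n-k)" using lt iff by auto
  have KV: "subsp q ?K" by (rule subsp_ker[OF subsp_span h])
  have "q^k < card ?K"
  proof (rule ccontr)
    assume "\<not> q^k < card ?K"
    then have "card ?K \<le> q^k" by simp
    then have "card ?K * card ?W \<le> q^k * card ?W" by simp
    also have "\<dots> < q^k * q^(n-k)" using cW q2 by simp
    also have "\<dots> = q^n" using kn by (simp flip: power_add)
    finally show False using cnt cU W by simp
  qed
  then have le: "card (Fq q :: 'a set)^k \<le> card ?K" and lt2: "card (Fq q :: 'a set)^k < card ?K"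
    using card_Fq by simp_all
  obtain b where b: "\<forall>i<k. b i \<in> ?K" "lin_indep_q q b k" using exists_indep[OF KV le] by blast
  obtain b' where b': "\<forall>i<Suc k. b' i \<in> ?K" "lin_indep_q q b' (Suc k)"
    using indep_ext[OF KV b lt2] by blast
  then show ?thesis by blast
qed

lemma indep_prefix:
  assumes "lin_indep_q q (g::nat \<Rightarrow> 'a) n" "k \<le> n"
  shows "lin_indep_q q g k"
  unfolding lin_indep_q_def
proof (rule allI, rule impI)
  fix c assume c: "(\<forall>i<k. c i \<in> Fq q) \<and> (\<Sum>i<k. c i * g i) = 0"
  define c' where "c' = (\<lambda>i. if i < k then c i else 0)"
  have "(\<Sum>i<n. c' i * g i) = (\<Sum>i<k. c' i * g i)"
    by (rule sum.mono_neutral_right) (use assms(2) in \<open>auto simp: c'_def\<close>)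
  also have "\<dots> = (\<Sum>i<k. c i * g i)" by (rule sum.cong) (simp_all add: c'_def)
  finally have s0: "(\<Sum>i<n. c' i * g i) = 0" using c by simp
  have "\<forall>i<n. c' i \<in> Fq q" using c Fq_0 by (simp add: c'_def)
  then have z: "\<forall>i<n. c' i = 0" using mp[OF spec[OF assms(1)[unfolded lin_indep_q_def], of c']] s0 by blast
  show "\<forall>i<k. c i = 0"
  proof (intro allI impI)
    fix i assume i: "i < k"
    then have "c' i = 0" using z assms(2) by simp
    then show "c i = 0" using i by (simp add: c'_def)
  qed
qed

lemma span_cong: "(\<And>i. i < n \<Longrightarrow> v i = w i) \<Longrightarrow> span_q q v n = span_q q w n"
  unfolding span_q_def by (metis (no_types, lifting) lessThan_iff sum.cong)

lemma main:
  fixes g :: "nat \<Rightarrow> 'a" and a1 :: 'a and c :: "nat \<Rightarrow> 'a"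
  assumes k1: "1 \<le> k" and kn: "k + 1 < n" and g_indep: "lin_indep_q q g n"
  shows "rank_dist_code q n
           (\<lambda>i. if i < n then (g i ^ (q ^ (k+1)) - a1 * g i ^ (q ^ k)
                               + (\<Sum>j<k. c j * g i ^ (q ^ j))) else 0)
           (gabidulin q k n g) \<noteq> n - k
    \<longleftrightarrow> (\<exists>\<beta> :: nat \<Rightarrow> 'a. (\<forall>i<k+1. \<beta> i \<in> span_q q g n) \<and> lin_indep_q q \<beta> (k+1) \<and>
          a1 = det (R_mat q k \<beta>) / det (moore q (k+1) (k+1) \<beta>))"
proof -
  define fx where "fx x = x^(q^(k+1)) - a1 * x^(q^k) + (\<Sum>j<k. c j * x^(q^j))" for x :: 'a
  define u where "u = (\<lambda>i. if i < n then fx (g i) else 0)"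
  have u_eq: "(\<lambda>i. if i < n then (g i ^ (q ^ (k+1)) - a1 * g i ^ (q ^ k)
                               + (\<Sum>j<k. c j * g i ^ (q ^ j))) else 0) = u"
    unfolding u_def by (intro ext) (simp add: fx_def)
  define ap where "ap a = (\<lambda>i. if i < k then c i - a i else if i = k then - a1 else (1::'a))" for a :: "nat \<Rightarrow> 'a"
  have hfact: "fx x - lin_eval q k a x = lin_eval q (k+2) (ap a) x" for a x
  proof -
    have "lin_eval q (k+2) (ap a) x = (\<Sum>i<k. ap a i * x^(q^i)) + ap a k * x^(q^k) + ap a (Suc k) * x^(q^Suc k)"
      by (simp add: lin_eval_def numeral_2_eq_2)
    also have "(\<Sum>i<k. ap a i * x^(q^i)) = (\<Sum>i<k. c i * x^(q^i)) - (\<Sum>i<k. a i * x^(q^i))"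
      by (simp add: ap_def sum_subtractf left_diff_distrib)
    finally show ?thesis by (simp add: fx_def lin_eval_def ap_def)
  qed
  define R where "R a = dim_q q (span_q q (\<lambda>i. lin_eval q (k+2) (ap a) (g i)) n)" for a
  have rd: "rank_dist q n u (\<lambda>i. if i < n then lin_eval q k a (g i) else 0) = R a" for a
    unfolding rank_dist_def R_def
    by (rule arg_cong[where f="dim_q q"], rule span_cong) (simp add: u_def hfact)
  have img: "rank_dist q n u ` gabidulin q k n g = range R"
  proof
    show "rank_dist q n u ` gabidulin q k n g \<subseteq> range R" unfolding gabidulin_def using rd by auto
  next
    show "range R \<subseteq> rank_dist q n u ` gabidulin q k n g"
    proof
      fix y assume "y \<in> range R"
      then obtain a where y: "y = R a" by blast
      have mem: "(\<lambda>i. if i < n then lin_eval q k a (g i) else 0) \<in> gabidulin q k n g"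
        unfolding gabidulin_def by blast
      have "y = rank_dist q n u (\<lambda>i. if i < n then lin_eval q k a (g i) else 0)" using rd[of a] y by simp
      then show "y \<in> rank_dist q n u ` gabidulin q k n g" using mem by (rule image_eqI)
    qed
  qed
  have "range R \<subseteq> {..card (UNIV::'a set)}"
  proof
    fix y assume "y \<in> range R"
    then obtain a where y: "y = R a" by blast
    have "R a \<le> card (span_q q (\<lambda>i. lin_eval q (k+2) (ap a) (g i)) n)"
      unfolding R_def by (rule dim_le_card[OF subsp_span])
    also have "\<dots> \<le> card (UNIV::'a set)" by (rule card_mono) auto
    finally show "y \<in> {..card (UNIV::'a set)}" using y by simp
  qed
  then have fin: "finite (range R)" by (rule finite_subset) simp
  have rdc: "rank_dist_code q n u (gabidulin q k n g) = Min (range R)"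
    unfolding rank_dist_code_def img ..
  have kn': "k < n" "k \<le> n" "k + 1 \<le> n" using kn by auto
  show ?thesis unfolding u_eq rdc
  proof
    assume ne: "Min (range R) \<noteq> n - k"
    show "\<exists>\<beta> :: nat \<Rightarrow> 'a. (\<forall>i<k+1. \<beta> i \<in> span_q q g n) \<and> lin_indep_q q \<beta> (k+1) \<and>
          a1 = det (R_mat q k \<beta>) / det (moore q (k+1) (k+1) \<beta>)"
    proof (rule ccontr)
      assume nb: "\<not> (\<exists>\<beta> :: nat \<Rightarrow> 'a. (\<forall>i<k+1. \<beta> i \<in> span_q q g n) \<and> lin_indep_q q \<beta> (k+1) \<and>
          a1 = det (R_mat q k \<beta>) / det (moore q (k+1) (k+1) \<beta>))"
      have lower: "n - k \<le> R a" for a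
      proof (rule ccontr)
        assume "\<not> n - k \<le> R a"
        then have "dim_q q (span_q q (\<lambda>i. lin_eval q (k+2) (ap a) (g i)) n) < n - k"
          by (simp add: R_def)
        from rank_lower[OF g_indep linmap_lin_eval kn'(1) this]
        obtain \<beta> where \<beta>: "\<forall>i<Suc k. \<beta> i \<in> span_q q g n \<and> lin_eval q (k+2) (ap a) (\<beta> i) = 0"
          "lin_indep_q q \<beta> (Suc k)" by blast
        have "det (R_mat q k \<beta>) = a1 * det (moore q (k+1) (k+1) \<beta>)"
        proof (rule R_eq)
          fix j assume "j < k+1"
          then show "(\<Sum>i<k+2. ap a i * \<beta> j^(q^i)) = 0" using \<beta>(1) by (simp add: lin_eval_def)
        qed (simp_all add: ap_def)
        moreover have "det (moore q (k+1) (k+1) \<beta>) \<noteq> 0" using moore_nz \<beta>(2) by simp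
        ultimately have "a1 = det (R_mat q k \<beta>) / det (moore q (k+1) (k+1) \<beta>)" by simp
        then show False using nb \<beta> by auto
      qed
      have dg: "det (moore q k k g) \<noteq> 0" by (rule moore_nz[OF indep_prefix[OF g_indep kn'(2)]])
      obtain a0 where a0: "\<forall>l<k. lin_eval q k a0 (g l) = fx (g l)"
        using interp[OF dg, of "\<lambda>l. fx (g l)"] by blast
      have "R a0 \<le> n - k" unfolding R_def
      proof (rule rank_upper[OF g_indep linmap_lin_eval _ indep_prefix[OF g_indep kn'(2)] kn'(2)])
        show "\<forall>i<k. g i \<in> span_q q g n \<and> lin_eval q (k+2) (ap a0) (g i) = 0"
          using a0 span_mem kn'(1) hfact[symmetric] by auto
      qed
      then have "R a0 = n - k" using lower[of a0] by simp
      then have inR: "n - k \<in> range R" by (metis rangeI)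
      have "Min (range R) = n - k"
        by (rule Min_eqI[OF fin _ inR]) (use lower in auto)
      with ne show False by simp
    qed
  next
    assume "\<exists>\<beta> :: nat \<Rightarrow> 'a. (\<forall>i<k+1. \<beta> i \<in> span_q q g n) \<and> lin_indep_q q \<beta> (k+1) \<and>
          a1 = det (R_mat q k \<beta>) / det (moore q (k+1) (k+1) \<beta>)"
    then obtain \<beta> :: "nat \<Rightarrow> 'a" where \<beta>: "\<forall>i<k+1. \<beta> i \<in> span_q q g n" "lin_indep_q q \<beta> (k+1)"
      "a1 = det (R_mat q k \<beta>) / det (moore q (k+1) (k+1) \<beta>)" by blast
    define d where "d = det (moore q (k+1) (k+1) \<beta>)"
    have d: "d \<noteq> 0" unfolding d_def by (rule moore_nz[OF \<beta>(2)])
    define C where "C i = cofactor (Bm q k \<beta> 0) i (k+1)" for i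
    define a0 where "a0 i = c i - C i / d" for i
    have h_eq: "lin_eval q (k+2) (ap a0) x = det (Bm q k \<beta> x) / d" for x
    proof -
      have "det (Bm q k \<beta> x) / d = (\<Sum>i<k+2. x^(q^i) * C i) / d"
        by (simp add: Bm_expand C_def)
      also have "\<dots> = (\<Sum>i<k. x^(q^i) * C i / d) + x^(q^k) * C k / d + x^(q^Suc k) * C (Suc k) / d"
        by (simp add: numeral_2_eq_2 sum_divide_distrib add_divide_distrib)
      also have "C (Suc k) = d" using Bm_top[of q k \<beta>] by (simp add: C_def d_def)
      also have "C k = - det (R_mat q k \<beta>)" using Bm_k[of q k \<beta>] by (simp add: C_def)
      also have "(\<Sum>i<k. x^(q^i) * C i / d) = (\<Sum>i<k. ap a0 i * x^(q^i))"
        by (rule sum.cong) (simp_all add: ap_def a0_def)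
      finally have "det (Bm q k \<beta> x) / d = (\<Sum>i<k. ap a0 i * x^(q^i)) + x^(q^k) * - det (R_mat q k \<beta>) / d + x^(q^Suc k)"
        using d by simp
      moreover have "lin_eval q (k+2) (ap a0) x = (\<Sum>i<k. ap a0 i * x^(q^i)) + ap a0 k * x^(q^k) + ap a0 (Suc k) * x^(q^Suc k)"
        by (simp add: lin_eval_def numeral_2_eq_2)
      ultimately show ?thesis using \<beta>(3) by (simp add: ap_def d_def)
    qed
    have van: "lin_eval q (k+2) (ap a0) (\<beta> i) = 0" if "i < k+1" for i
    proof -
      have "det (Bm q k \<beta> (\<beta> i)) = 0" using Bm_van[of i k q \<beta>] that by simp
      then show ?thesis by (simp only: h_eq) simp
    qed
    have "R a0 \<le> n - (k+1)" unfolding R_def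
    proof (rule rank_upper[OF g_indep linmap_lin_eval _ \<beta>(2) kn'(3)])
      show "\<forall>i<k+1. \<beta> i \<in> span_q q g n \<and> lin_eval q (k+2) (ap a0) (\<beta> i) = 0"
        using \<beta>(1) van by blast
    qed
    moreover have "Min (range R) \<le> R a0" by (rule Min_le[OF fin]) simp
    ultimately show "Min (range R) \<noteq> n - k" using kn by simp
  qed
qed

end
end

theorem lemma3:
  fixes q m k n :: nat and g :: "nat \<Rightarrow> 'a::{field,finite}"
    and a1 :: 'a and c :: "nat \<Rightarrow> 'a"
  assumes q_pp: "\<exists>p r. prime p \<and> r > 0 \<and> q = p ^ r"
    and card: "card (UNIV :: 'a set) = q ^ m"
    and k1: "1 \<le> k" and kn: "k + 1 < n" and nm: "n \<le> m"
    and g_indep: "lin_indep_q q g n"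
  shows "rank_dist_code q n
           (\<lambda>i. if i < n then (g i ^ (q ^ (k+1)) - a1 * g i ^ (q ^ k)
                               + (\<Sum>j<k. c j * g i ^ (q ^ j))) else 0)
           (gabidulin q k n g) \<noteq> n - k
    \<longleftrightarrow> (\<exists>\<beta> :: nat \<Rightarrow> 'a. (\<forall>i<k+1. \<beta> i \<in> span_q q g n) \<and> lin_indep_q q \<beta> (k+1) \<and>
          a1 = det (R_mat q k \<beta>) / det (moore q (k+1) (k+1) \<beta>))"
proof -
  obtain p r where p: "prime p" "r > 0" "q = p ^ r" using q_pp by blast
  have m0: "m > 0" using kn nm by simp
  have "2 \<le> p" using p(1) by (simp add: prime_ge_2_nat)
  also have "p \<le> p ^ r" using p(2) \<open>2 \<le> p\<close> by (intro self_le_power) simp_all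
  finally have q2: "2 \<le> q" using p(3) by simp
  have frob: "(x + y :: 'a)^q = x^q + y^q" for x y
    using frob_of_pp[OF p(1) p(2) m0] card p(3) by simp
  have m1: "1 \<le> m" using m0 by simp
  show ?thesis by (rule main[OF q2 frob m1 card k1 kn g_indep])
qed

end
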